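(* Let $\varphi$ be an $\mathrm{LTL_{PSL}}$ formula and let $I$ be the set of subformulae of $\varphi$ of the form $s\preceq s'$. Then $\varphi$ is $\mathrm{SLTL}$-satisfiable if and only if there exists a partition $D=(I^+,I^-)$ of $I$ such that $\varphi_D$ is $\mathrm{SLTL}$-satisfiable, where $\varphi_D=\varphi[I^+\mapsto\top,I^-\mapsto\bot]\wedge\chi_D$, $\varphi[I^+\mapsto\top,I^-\mapsto\bot]$ is obtained from $\varphi$ by replacing each member of $I^+$ by $\top$ and each member of $I^-$ by $\bot$, and $\chi_D=G\Big(\bigwedge_{(s\preceq s')\in I^+}(s\preceq s')\wedge\bigwedge_{(s\preceq s')\in I^-}\big(\Diamond_s p_{s,s'}\wedge\neg\Diamond_{s'}p_{s,s'}\big)\Big)$ with each $p_{s,s'}$ a fresh propositional variable not occurring in $\varphi$.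
   Context: Fix a countably infinite set $\mathcal{P}$ of propositional variables and a countably infinite set $\mathcal{S}$ of standpoint symbols containing a distinguished universal standpoint symbol $*$. SLTL formulae: $\varphi ::= p \mid s \preceq s' \mid \neg\varphi \mid \varphi\wedge\varphi \mid \Diamond_s\varphi \mid \Box_s\varphi \mid X\varphi \mid \varphi\,U\,\varphi$ ($p\in\mathcal{P}$, $s,s'\in\mathcal{S}$). A model is $M=(\Pi,\lambda)$ with $\Pi\neq\emptyset$ a set of traces $\sigma:\mathbb{N}\to 2^{\mathcal{P}}$ and $\lambda:\mathcal{S}\to 2^{\Pi}\setminus\{\emptyset\}$, $\lambda( * )=\Pi$. Semantics: $M,\sigma,i\models p$ iff $p\in\sigma(i)$; $M,\sigma,i\models s\preceq s'$ iff $\lambda(s)\subseteq\lambda(s')$; Boolean clauses as usual; $M,\sigma,i\models\Diamond_s\psi$ iff $M,\sigma',i\models\psi$ for some $\sigma'\in\lambda(s)$; $\Box_s$ dually with "for all"; $M,\sigma,i\models X\psi$ iff $M,\sigma,i+1\models\psi$; $M,\sigma,i\models\psi\,U\,\chi$ iff there is $i'\ge i$ with $M,\sigma,i'\models\chi$ and $M,\sigma,i''\models\psi$ for all $i\le i''<i'$. $G\psi$ abbreviates $\neg(\top\,U\,\neg\psi)$. $\varphi$ is satisfiable iff $M,\sigma,0\models\varphi$ for some $M=(\Pi,\lambda)$, $\sigma\in\Pi$. $\mathrm{LTL_{PSL}}$ is the fragment of SLTL consisting of formulae in which no temporal connective ($X$ or $U$) occurs in the scope of a standpoint modality $\Diamond_s$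 or $\Box_s$. *)

theory Defs
  imports Main "HOL-Library.Product_Lexorder"
begin

text \<open>Propositional variables and standpoint symbols are both represented by nat
  (countably infinite); the universal standpoint symbol * is the standpoint 0.\<close>

type_synonym pvar = nat
type_synonym sp = nat

definition star :: sp where "star = 0"

datatype fml =
    Prop pvar
  | Prec sp sp
  | Neg fml
  | Conj fml fml
  | Dia sp fml
  | Box sp fml
  | Next fml
  | Until fml fml

type_synonym trace = "nat \<Rightarrow> pvar set"

definition is_model :: "trace set \<Rightarrow> (sp \<Rightarrow> trace set) \<Rightarrow> bool" where
  "is_model Pi lam \<longleftrightarrow> Pi \<noteq> {} \<and> (\<forall>s. lam s \<subseteq> Pi \<and> lam s \<noteq> {}) \<and> lam star = Pi"

fun sem :: "(sp \<Rightarrow> trace set) \<Rightarrow> trace \<Rightarrow> nat \<Rightarrow> fml \<Rightarrow> bool" where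
  "sem lam \<sigma> i (Prop p) = (p \<in> \<sigma> i)"
| "sem lam \<sigma> i (Prec s s') = (lam s \<subseteq> lam s')"
| "sem lam \<sigma> i (Neg \<psi>) = (\<not> sem lam \<sigma> i \<psi>)"
| "sem lam \<sigma> i (Conj \<psi> \<chi>) = (sem lam \<sigma> i \<psi> \<and> sem lam \<sigma> i \<chi>)"
| "sem lam \<sigma> i (Dia s \<psi>) = (\<exists>\<sigma>'\<in>lam s. sem lam \<sigma>' i \<psi>)"
| "sem lam \<sigma> i (Box s \<psi>) = (\<forall>\<sigma>'\<in>lam s. sem lam \<sigma>' i \<psi>)"
| "sem lam \<sigma> i (Next \<psi>) = sem lam \<sigma> (Suc i) \<psi>"
| "sem lam \<sigma> i (Until \<psi> \<chi>) =
     (\<exists>i'\<ge>i. sem lam \<sigma> i' \<chi> \<and> (\<forall>i''. i \<le> i'' \<and> i'' < i' \<longrightarrow> sem lam \<sigma> i'' \<psi>))"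

definition satisfiable :: "fml \<Rightarrow> bool" where
  "satisfiable \<phi> \<longleftrightarrow> (\<exists>Pi lam \<sigma>. is_model Pi lam \<and> \<sigma> \<in> Pi \<and> sem lam \<sigma> 0 \<phi>)"

definition Top :: fml where "Top = Prec star star"
definition Bot :: fml where "Bot = Neg Top"

definition Glob :: "fml \<Rightarrow> fml" where "Glob \<psi> = Neg (Until Top (Neg \<psi>))"

fun temporal_free :: "fml \<Rightarrow> bool" where
  "temporal_free (Prop p) = True"
| "temporal_free (Prec s s') = True"
| "temporal_free (Neg \<psi>) = temporal_free \<psi>"
| "temporal_free (Conj \<psi> \<chi>) = (temporal_free \<psi> \<and> temporal_free \<chi>)"
| "temporal_free (Dia s \<psi>) = temporal_free \<psi>"
| "temporal_free (Box s \<psi>) = temporal_free \<psi>"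
| "temporal_free (Next \<psi>) = False"
| "temporal_free (Until \<psi> \<chi>) = False"

fun ltl_psl :: "fml \<Rightarrow> bool" where
  "ltl_psl (Prop p) = True"
| "ltl_psl (Prec s s') = True"
| "ltl_psl (Neg \<psi>) = ltl_psl \<psi>"
| "ltl_psl (Conj \<psi> \<chi>) = (ltl_psl \<psi> \<and> ltl_psl \<chi>)"
| "ltl_psl (Dia s \<psi>) = temporal_free \<psi>"
| "ltl_psl (Box s \<psi>) = temporal_free \<psi>"
| "ltl_psl (Next \<psi>) = ltl_psl \<psi>"
| "ltl_psl (Until \<psi> \<chi>) = (ltl_psl \<psi> \<and> ltl_psl \<chi>)"

fun subformulas :: "fml \<Rightarrow> fml set" where
  "subformulas (Prop p) = {Prop p}"
| "subformulas (Prec s s') = {Prec s s'}"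
| "subformulas (Neg \<psi>) = insert (Neg \<psi>) (subformulas \<psi>)"
| "subformulas (Conj \<psi> \<chi>) = insert (Conj \<psi> \<chi>) (subformulas \<psi> \<union> subformulas \<chi>)"
| "subformulas (Dia s \<psi>) = insert (Dia s \<psi>) (subformulas \<psi>)"
| "subformulas (Box s \<psi>) = insert (Box s \<psi>) (subformulas \<psi>)"
| "subformulas (Next \<psi>) = insert (Next \<psi>) (subformulas \<psi>)"
| "subformulas (Until \<psi> \<chi>) = insert (Until \<psi> \<chi>) (subformulas \<psi> \<union> subformulas \<chi>)"

fun props :: "fml \<Rightarrow> pvar set" where
  "props (Prop p) = {p}"
| "props (Prec s s') = {}"
| "props (Neg \<psi>) = props \<psi>"
| "props (Conj \<psi> \<chi>) = props \<psi> \<union> props \<chi>"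
| "props (Dia s \<psi>) = props \<psi>"
| "props (Box s \<psi>) = props \<psi>"
| "props (Next \<psi>) = props \<psi>"
| "props (Until \<psi> \<chi>) = props \<psi> \<union> props \<chi>"

definition incl_subf :: "fml \<Rightarrow> (sp \<times> sp) set" where
  "incl_subf \<phi> = {(s, s'). Prec s s' \<in> subformulas \<phi>}"

fun subst_incl :: "(sp \<times> sp) set \<Rightarrow> (sp \<times> sp) set \<Rightarrow> fml \<Rightarrow> fml" where
  "subst_incl P N (Prop p) = Prop p"
| "subst_incl P N (Prec s s') =
     (if (s, s') \<in> P then Top else if (s, s') \<in> N then Bot else Prec s s')"
| "subst_incl P N (Neg \<psi>) = Neg (subst_incl P N \<psi>)"
| "subst_incl P N (Conj \<psi> \<chi>) = Conj (subst_incl P N \<psi>) (subst_incl P N \<chi>)"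
| "subst_incl P N (Dia s \<psi>) = Dia s (subst_incl P N \<psi>)"
| "subst_incl P N (Box s \<psi>) = Box s (subst_incl P N \<psi>)"
| "subst_incl P N (Next \<psi>) = Next (subst_incl P N \<psi>)"
| "subst_incl P N (Until \<psi> \<chi>) = Until (subst_incl P N \<psi>) (subst_incl P N \<chi>)"

definition BigConj :: "fml list \<Rightarrow> fml" where
  "BigConj xs = foldr Conj xs Top"

text \<open>chi_D for the partition (P, N), with fresh variables given by f s s'.\<close>
definition chi :: "(sp \<times> sp) set \<Rightarrow> (sp \<times> sp) set \<Rightarrow> (sp \<Rightarrow> sp \<Rightarrow> pvar) \<Rightarrow> fml" where
  "chi P N f = Glob (Conj
     (BigConj (map (\<lambda>(s, s'). Prec s s') (sorted_list_of_set P)))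
     (BigConj (map (\<lambda>(s, s'). Conj (Dia s (Prop (f s s'))) (Neg (Dia s' (Prop (f s s')))))
        (sorted_list_of_set N))))"

definition phi_D :: "fml \<Rightarrow> (sp \<times> sp) set \<Rightarrow> (sp \<times> sp) set \<Rightarrow> (sp \<Rightarrow> sp \<Rightarrow> pvar) \<Rightarrow> fml" where
  "phi_D \<phi> P N f = Conj (subst_incl P N \<phi>) (chi P N f)"

end

theory Submission
  imports Defs
begin

lemma sem_Top[simp]: "sem lam \<sigma> i Top"
  by (simp add: Top_def)

lemma sem_Glob: "sem lam \<sigma> i (Glob \<psi>) = (\<forall>j\<ge>i. sem lam \<sigma> j \<psi>)"
  by (auto simp: Glob_def)

lemma sem_BigConj: "sem lam \<sigma> i (BigConj xs) = (\<forall>x\<in>set xs. sem lam \<sigma> i x)"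
  by (induction xs) (auto simp: BigConj_def)

lemma sem_subst:
  assumes "\<forall>(a,b)\<in>P. lam a \<subseteq> lam b" "\<forall>(a,b)\<in>N. \<not> lam a \<subseteq> lam b"
  shows "sem lam \<sigma> i (subst_incl P N \<psi>) = sem lam \<sigma> i \<psi>"
  using assms
  by (induction \<psi> arbitrary: \<sigma> i) (auto simp: Bot_def split: if_splits)

lemma sem_transfer:
  assumes "\<And>\<sigma> i p. p \<notin> F \<Longrightarrow> (p \<in> g \<sigma> i) = (p \<in> \<sigma> i)"
    and "props \<psi> \<inter> F = {}"
    and "\<And>a b. Prec a b \<in> subformulas \<psi> \<Longrightarrow> (g ` lam a \<subseteq> g ` lam b) = (lam a \<subseteq> lam b)"
  shows "sem (\<lambda>s. g ` lam s) (g \<sigma>) i \<psi> = sem lam \<sigma> i \<psi>"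
  using assms(2,3)
proof (induction \<psi> arbitrary: \<sigma> i)
  case (Prop x)
  then show ?case using assms(1) by auto
next
  case (Conj \<psi>1 \<psi>2)
  have a1: "props \<psi>1 \<inter> F = {}" and a2: "props \<psi>2 \<inter> F = {}" using Conj.prems(1) by auto
  have b1: "\<And>a b. Prec a b \<in> subformulas \<psi>1 \<Longrightarrow> (g ` lam a \<subseteq> g ` lam b) = (lam a \<subseteq> lam b)"
   and b2: "\<And>a b. Prec a b \<in> subformulas \<psi>2 \<Longrightarrow> (g ` lam a \<subseteq> g ` lam b) = (lam a \<subseteq> lam b)"
    using Conj.prems(2) by auto
  have "\<And>\<sigma> i. sem (\<lambda>s. g ` lam s) (g \<sigma>) i \<psi>1 = sem lam \<sigma> i \<psi>1"
       "\<And>\<sigma> i. sem (\<lambda>s. g ` lam s) (g \<sigma>) i \<psi>2 = sem lam \<sigma> i \<psi>2"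
    using Conj.IH(1)[OF a1 b1] Conj.IH(2)[OF a2 b2] by auto
  then show ?case by simp
next
  case (Until \<psi>1 \<psi>2)
  have a1: "props \<psi>1 \<inter> F = {}" and a2: "props \<psi>2 \<inter> F = {}" using Until.prems(1) by auto
  have b1: "\<And>a b. Prec a b \<in> subformulas \<psi>1 \<Longrightarrow> (g ` lam a \<subseteq> g ` lam b) = (lam a \<subseteq> lam b)"
   and b2: "\<And>a b. Prec a b \<in> subformulas \<psi>2 \<Longrightarrow> (g ` lam a \<subseteq> g ` lam b) = (lam a \<subseteq> lam b)"
    using Until.prems(2) by auto
  have "\<And>\<sigma> i. sem (\<lambda>s. g ` lam s) (g \<sigma>) i \<psi>1 = sem lam \<sigma> i \<psi>1"
       "\<And>\<sigma> i. sem (\<lambda>s. g ` lam s) (g \<sigma>) i \<psi>2 = sem lam \<sigma> i \<psi>2"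
    using Until.IH(1)[OF a1 b1] Until.IH(2)[OF a2 b2] by auto
  then show ?case by simp
qed auto

lemma finite_subformulas: "finite (subformulas \<phi>)"
  by (induction \<phi>) auto

lemma finite_incl: "finite (incl_subf \<phi>)"
proof -
  have "incl_subf \<phi> = (\<lambda>(a,b). Prec a b) -` subformulas \<phi>"
    by (auto simp: incl_subf_def)
  moreover have "inj (\<lambda>(a,b). Prec a b)" by (auto simp: inj_def)
  ultimately show ?thesis using finite_subformulas finite_vimageI by metis
qed

theorem lemma3:
  fixes \<phi> :: fml and f :: "sp \<Rightarrow> sp \<Rightarrow> pvar"
  assumes "ltl_psl \<phi>"
    and fresh: "\<forall>(s, s') \<in> incl_subf \<phi>. f s s' \<notin> props \<phi>"
    and distinct: "inj_on (\<lambda>(s, s'). f s s') (incl_subf \<phi>)"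
  shows "satisfiable \<phi> \<longleftrightarrow>
    (\<exists>P N. P \<union> N = incl_subf \<phi> \<and> P \<inter> N = {} \<and> satisfiable (phi_D \<phi> P N f))"
proof
  assume "satisfiable \<phi>"
  then obtain Pi lam \<sigma> where M: "is_model Pi lam" "\<sigma> \<in> Pi" "sem lam \<sigma> 0 \<phi>"
    by (auto simp: satisfiable_def)
  define I where "I = incl_subf \<phi>"
  define P where "P = {(a,b)\<in>I. lam a \<subseteq> lam b}"
  define N where "N = I - P"
  define F where "F = (\<lambda>(a,b). f a b) ` N"
  define g where "g = (\<lambda>\<sigma>' :: trace. \<lambda>i. (\<sigma>' i - F) \<union> {f a b | a b. (a,b)\<in>N \<and> \<sigma>' \<notin> lam b})"
  define lam2 where "lam2 = (\<lambda>s. g ` lam s)"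
  have finI: "finite I" using finite_incl I_def by simp
  have finP: "finite P" and finN: "finite N" using finI unfolding P_def N_def
    by (auto intro: finite_subset[of _ I])
  have gF: "(p \<in> g \<sigma>' i) = (p \<in> \<sigma>' i)" if "p \<notin> F" for \<sigma>' i p
    using that by (auto simp: g_def F_def)
  have Pinc: "lam2 a \<subseteq> lam2 b" if "(a,b) \<in> P" for a b
    using that by (auto simp: P_def lam2_def)
  have Nnot: "\<exists>\<tau>\<in>lam2 a. f a b \<in> \<tau> i" and Nnone: "\<forall>\<tau>\<in>lam2 b. f a b \<notin> \<tau> i"
    if "(a,b) \<in> N" for a b i
  proof -
    from that obtain t where t: "t \<in> lam a" "t \<notin> lam b" by (auto simp: N_def P_def)
    have "g t \<in> lam2 a" using t by (simp add: lam2_def)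
    moreover have "f a b \<in> g t i" using t that unfolding g_def by blast
    ultimately show "\<exists>\<tau>\<in>lam2 a. f a b \<in> \<tau> i" by blast
    show "\<forall>\<tau>\<in>lam2 b. f a b \<notin> \<tau> i"
    proof
      fix \<tau> assume "\<tau> \<in> lam2 b"
      then obtain u where u: "u \<in> lam b" "\<tau> = g u" by (auto simp: lam2_def)
      have "f a b \<in> F" using that by (auto simp: F_def)
      moreover have "f a b \<noteq> f c d" if "(c,d) \<in> N" "u \<notin> lam d" for c d
      proof
        assume "f a b = f c d"
        have m: "(a,b) \<in> incl_subf \<phi>" "(c,d) \<in> incl_subf \<phi>"
          using \<open>(a,b)\<in>N\<close> \<open>(c,d)\<in>N\<close> by (auto simp: N_def I_def)
        have e: "(\<lambda>(s, s'). f s s') (a,b) = (\<lambda>(s, s'). f s s') (c,d)"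
          using \<open>f a b = f c d\<close> by simp
        have "(a,b) = (c,d)"
          by (rule inj_onD[OF distinct e m])
        with u that show False by simp
      qed
      ultimately show "f a b \<notin> \<tau> i" using u by (auto simp: g_def)
    qed
  qed
  have Nnot2: "\<not> lam2 a \<subseteq> lam2 b" if "(a,b) \<in> N" for a b
    using Nnot[OF that, of 0] Nnone[OF that, of 0] by blast
  have propsF: "props \<phi> \<inter> F = {}"
    using fresh by (auto simp: F_def N_def I_def)
  have precs: "(g ` lam a \<subseteq> g ` lam b) = (lam a \<subseteq> lam b)" if "Prec a b \<in> subformulas \<phi>" for a b
  proof -
    have "(a,b) \<in> I" using that by (simp add: I_def incl_subf_def)
    then show ?thesis using Pinc Nnot2 unfolding lam2_def
      by (cases "(a,b) \<in> P") (auto simp: P_def N_def)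
  qed
  have s1: "sem lam2 (g \<sigma>) 0 \<phi>"
    using sem_transfer[of F g \<phi> lam \<sigma> 0, OF gF propsF precs] M(3) by (simp add: lam2_def)
  have s2: "sem lam2 (g \<sigma>) 0 (subst_incl P N \<phi>)"
  proof -
    have "\<forall>(a,b)\<in>P. lam2 a \<subseteq> lam2 b" using Pinc by blast
    moreover have "\<forall>(a,b)\<in>N. \<not> lam2 a \<subseteq> lam2 b" using Nnot2 by blast
    ultimately show ?thesis using s1 sem_subst by metis
  qed
  have s3: "sem lam2 (g \<sigma>) 0 (chi P N f)"
    unfolding chi_def sem_Glob
    using Pinc Nnot Nnone finP finN
    by (auto simp: sem_BigConj)
  have "is_model (g ` Pi) lam2"
    using M(1) unfolding is_model_def lam2_def by blast
  moreover have "g \<sigma> \<in> g ` Pi" using M(2) by simp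
  ultimately have "satisfiable (phi_D \<phi> P N f)"
    using s2 s3 unfolding satisfiable_def phi_D_def by auto
  moreover have "P \<union> N = incl_subf \<phi>" "P \<inter> N = {}"
    by (auto simp: P_def N_def I_def)
  ultimately show "\<exists>P N. P \<union> N = incl_subf \<phi> \<and> P \<inter> N = {} \<and> satisfiable (phi_D \<phi> P N f)"
    by blast
next
  assume "\<exists>P N. P \<union> N = incl_subf \<phi> \<and> P \<inter> N = {} \<and> satisfiable (phi_D \<phi> P N f)"
  then obtain P N Pi lam \<sigma> where D: "P \<union> N = incl_subf \<phi>" "P \<inter> N = {}"
    and M: "is_model Pi lam" "\<sigma> \<in> Pi" "sem lam \<sigma> 0 (phi_D \<phi> P N f)"
    by (auto simp: satisfiable_def)
  have finP: "finite P" and finN: "finite N" using finite_incl[of \<phi>] D(1)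
    by (metis finite_Un)+
  have c: "sem lam \<sigma> 0 (chi P N f)" using M(3) by (simp add: phi_D_def)
  have cc: "\<forall>x\<in>P. sem lam \<sigma> 0 ((\<lambda>(s, s'). Prec s s') x)"
    "\<forall>x\<in>N. sem lam \<sigma> 0 ((\<lambda>(s, s'). Conj (Dia s (Prop (f s s'))) (Neg (Dia s' (Prop (f s s'))))) x)"
    using c finP finN unfolding chi_def sem_Glob by (simp_all add: sem_BigConj)
  have hP0: "lam a \<subseteq> lam b" if "(a,b) \<in> P" for a b
  proof -
    note \<open>(a,b) \<in> P\<close>
    with cc(1) have "sem lam \<sigma> 0 (Prec a b)" by fastforce
    then show "lam a \<subseteq> lam b" by simp
  qed
  have hP: "\<forall>(a,b)\<in>P. lam a \<subseteq> lam b" using hP0 by blast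
  have hN0: "\<not> lam a \<subseteq> lam b" if ab: "(a,b) \<in> N" for a b
  proof
    assume sub: "lam a \<subseteq> lam b"
    from cc(2) ab have "sem lam \<sigma> 0 (Conj (Dia a (Prop (f a b))) (Neg (Dia b (Prop (f a b)))))"
      by fastforce
    then show False using sub by auto
  qed
  have hN: "\<forall>(a,b)\<in>N. \<not> lam a \<subseteq> lam b" using hN0 by blast
  have "sem lam \<sigma> 0 \<phi>"
    using M(3) sem_subst[OF hP hN] by (simp add: phi_D_def)
  then show "satisfiable \<phi>" using M(1,2) by (auto simp: satisfiable_def)
qed

end
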